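(* Let $V$ and $V^+$ be as in the setup below and, for $1\le i\le n$, let $z_i:V^+\to V^+$ be a bijective highest central operator of degree $M_ie_i$ ($M_i\in\mathbb Z$, $e_i$ the $i$-th standard basis vector of $\mathbb Z^n$). Define $T_i:V^+\to V^+$ by $T_i(z_iv)=v$ for all $v\in V^+$, and $W=\operatorname{Span}_{\mathbb C}\{z_iv-v\mid v\in V^+,\ 1\le i\le n\}$. Then: (1) $T_iz_i=\mathrm{Id}$; (2) $[T_i,H\otimes\mathbb C_q]=0$; (3) $T_iv-v\in W$ for all $v\in V^+$; (4) $T_i^kv-v\in W$ for all $k\ge1$, $v\in V^+$; (5) $z_i^kv-v\in W$ for all $k\ge1$, $v\in V^+$.
   Context: Fix integers $n\ge2$, $d\ge2$. Let $q=(q_{ij})_{1\le i,j\le n}$ with $q_{ij}\in\mathbb C^\times$ roots of unity, $q_{ii}=1$, $q_{ij}=q_{ji}^{-1}$. The rational quantum torus $\mathbb C_q$ is generated by $t_1^{\pm1},\dots,t_n^{\pm1}$ with $t_it_i^{-1}=t_i^{-1}t_i=1$, $t_it_j=q_{ij}t_jt_i$; $t^a=t_1^{a_1}\cdots t_n^{a_n}$, $t^at^b=f(a,b)t^bt^a$ with $f(a,b)=\prod_{i,j}q_{ji}^{a_jb_i}$, $\operatorname{rad}f=\{a: f(a,b)=1\ \forall b\}$; $Z(\mathbb C_q)$ is spanned by $t^a$, $a\in\operatorname{rad}f$. $\tau(d,q)=\mathfrak{sl}_d(\mathbb C_q)$: $d\times d$ matrices over $\mathbb C_q$ with trace in $[\mathbb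 C_q,\mathbb C_q]$, commutator bracket. With $J\subset\mathbb C_q\otimes\mathbb C_q$ spanned by $x\otimes y+y\otimes x$, $xy\otimes z+yz\otimes x+zx\otimes y$, let $\langle t^a,t^b\rangle$ ($a+b\in\operatorname{rad}f$) be the image of $t^a\otimes t^b$ modulo $J$, $HC_1(\mathbb C_q)$ their span; $\tilde\tau(d,q)=\tau(d,q)\oplus HC_1(\mathbb C_q)$ with $HC_1$ central and $[X\otimes t^a,Y\otimes t^b]=(XY\otimes t^at^b-YX\otimes t^bt^a)+\mathrm{Tr}(XY)\langle t^a,t^b\rangle$ if $a+b\in\operatorname{rad}f$ (no last term otherwise); $\hat\tau(d,q)=\tilde\tau(d,q)\oplus D$, $D=\bigoplus_i\mathbb Cd_i$, $[d_i,d_j]=0$, $[d_i,X\otimes t^a]=a_iX\otimes t^a$, $[d_i,\langle t^a,t^b\rangle]=(a_i+b_i)\langle t^a,t^b\rangle$. Integrable: direct sum of weight spaces for $\mathfrak h=\dot{\mathfrak h}\oplus\bigoplus\mathbb C\langle t_i,t_i^{-1}\rangle\oplus\bigoplus\mathbb Cd_i$ ($\dot{\mathfrak h}$ = trace-zero diagonal matrices) and each $x_\alpha\otimes t^m$ ($x_\alpha$ a root vector of $\mathfrak{sl}_d(\mathbb C)$) acts locally nilpotently. Setup: $V$ is an irreducible integrable $\hat\tau(d,q)$-module with finite-dimensional weight spaces on which $HC_1(\mathbb C_q)$ acts trivially, regarded as a module over $(\mathfrak{gl}_d(\mathbb C)\otimes\mathbb C_q)\oplus D$ via $\mathfrak{gl}_d(\mathbb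 C)\otimes\mathbb C_q=\mathfrak{sl}_d(\mathbb C_q)\oplus(I_d\otimes Z(\mathbb C_q))$ with $I_d\otimes Z(\mathbb C_q)$ acting by zero. $H$ = diagonal matrices in $\mathfrak{gl}_d(\mathbb C)$, $N^+$ = strictly upper triangular matrices, $V^+=\{v\in V:(N^+\otimes\mathbb C_q)v=0\}$. A highest central operator of degree $m\in\mathbb Z^n$ is a linear map $z:V^+\to V^+$ commuting with the action of $H\otimes\mathbb C_q$ with $d_iz-zd_i=m_iz$ for all $i$. *)

theory Defs
  imports Complex_Main
begin

text \<open>Lattice Z^n, realised as integer functions on nat supported in {0..<n}
  (index i corresponds to t_(i+1) of the paper).\<close>
definition Zn :: "nat \<Rightarrow> (nat \<Rightarrow> int) set" where
  "Zn n = {a. \<forall>i\<ge>n. a i = 0}"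

definition unitvec :: "nat \<Rightarrow> nat \<Rightarrow> int" where
  "unitvec i = (\<lambda>k. if k = i then 1 else 0)"

definition is_root_of_unity :: "complex \<Rightarrow> bool" where
  "is_root_of_unity z \<longleftrightarrow> (\<exists>k::nat. k > 0 \<and> z ^ k = 1)"

definition qtorus_params :: "nat \<Rightarrow> (nat \<Rightarrow> nat \<Rightarrow> complex) \<Rightarrow> bool" where
  "qtorus_params n q \<longleftrightarrow>
     (\<forall>i<n. \<forall>j<n. is_root_of_unity (q i j) \<and> q j i = inverse (q i j)) \<and> (\<forall>i<n. q i i = 1)"

text \<open>Multiplication in C_q: t^a t^b = qcoc n q a b * t^(a+b), where
  t^a = t_1^(a_1) ... t_n^(a_n).\<close>
definition qcoc :: "nat \<Rightarrow> (nat \<Rightarrow> nat \<Rightarrow> complex) \<Rightarrow> (nat \<Rightarrow> int) \<Rightarrow> (nat \<Rightarrow> int) \<Rightarrow> complex" where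
  "qcoc n q a b = (\<Prod>i<n. \<Prod>j<i. q i j powi (a i * b j))"

text \<open>f(a,b) with t^a t^b = f(a,b) t^b t^a, and its radical.\<close>
definition fq :: "nat \<Rightarrow> (nat \<Rightarrow> nat \<Rightarrow> complex) \<Rightarrow> (nat \<Rightarrow> int) \<Rightarrow> (nat \<Rightarrow> int) \<Rightarrow> complex" where
  "fq n q a b = (\<Prod>i<n. \<Prod>j<n. q j i powi (a j * b i))"

definition radf :: "nat \<Rightarrow> (nat \<Rightarrow> nat \<Rightarrow> complex) \<Rightarrow> (nat \<Rightarrow> int) set" where
  "radf n q = {a \<in> Zn n. \<forall>b\<in>Zn n. fq n q a b = 1}"

text \<open>A module over (gl_d(C) \<otimes> C_q) \<oplus> D on the complex vector space ('v, sc) is given by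
  the actions E i j a of the basis elements E_ij \<otimes> t^a (i,j<d, a\<in>Z^n) and D k of d_k (k<n).\<close>

text \<open>Weight spaces for h = trace-zero diagonal matrices \<oplus> span <t_i,t_i^-1> \<oplus> D;
  the elements <t_i,t_i^-1> of HC_1 act trivially, so their weight component is 0.
  A weight of the trace-zero diagonal part is recorded by lam modulo constants.\<close>
definition wspace :: "nat \<Rightarrow> nat \<Rightarrow> (complex \<Rightarrow> 'v::ab_group_add \<Rightarrow> 'v)
    \<Rightarrow> (nat \<Rightarrow> nat \<Rightarrow> (nat \<Rightarrow> int) \<Rightarrow> 'v \<Rightarrow> 'v) \<Rightarrow> (nat \<Rightarrow> 'v \<Rightarrow> 'v)
    \<Rightarrow> (nat \<Rightarrow> complex) \<Rightarrow> (nat \<Rightarrow> complex) \<Rightarrow> 'v set" where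
  "wspace n d sc E D lam mu =
     {v. (\<forall>i<d. \<forall>j<d. E i i (\<lambda>_. 0) v - E j j (\<lambda>_. 0) v = sc (lam i - lam j) v) \<and>
         (\<forall>k<n. D k v = sc (mu k) v)}"

definition irr_int_module :: "nat \<Rightarrow> nat \<Rightarrow> (nat \<Rightarrow> nat \<Rightarrow> complex) \<Rightarrow> (complex \<Rightarrow> 'v::ab_group_add \<Rightarrow> 'v)
    \<Rightarrow> (nat \<Rightarrow> nat \<Rightarrow> (nat \<Rightarrow> int) \<Rightarrow> 'v \<Rightarrow> 'v) \<Rightarrow> (nat \<Rightarrow> 'v \<Rightarrow> 'v) \<Rightarrow> bool" where
  "irr_int_module n d q sc E D \<longleftrightarrow>
     vector_space sc \<and>
     (\<forall>i<d. \<forall>j<d. \<forall>a\<in>Zn n. Vector_Spaces.linear sc sc (E i j a)) \<and>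
     (\<forall>k<n. Vector_Spaces.linear sc sc (D k)) \<and>
     \<comment> \<open>bracket of gl_d(C_q) (the central HC_1 term acts trivially)\<close>
     (\<forall>i<d. \<forall>j<d. \<forall>k<d. \<forall>l<d. \<forall>a\<in>Zn n. \<forall>b\<in>Zn n. \<forall>v.
        E i j a (E k l b v) - E k l b (E i j a v) =
          (if j = k then sc (qcoc n q a b) (E i l (\<lambda>x. a x + b x) v) else 0)
        - (if l = i then sc (qcoc n q b a) (E k j (\<lambda>x. a x + b x) v) else 0)) \<and>
     (\<forall>k<n. \<forall>l<n. \<forall>v. D k (D l v) = D l (D k v)) \<and>
     (\<forall>k<n. \<forall>i<d. \<forall>j<d. \<forall>a\<in>Zn n. \<forall>v.
        D k (E i j a v) - E i j a (D k v) = sc (of_int (a k)) (E i j a v)) \<and>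
     \<comment> \<open>I_d \<otimes> Z(C_q) acts by zero\<close>
     (\<forall>a\<in>radf n q. \<forall>v. (\<Sum>i<d. E i i a v) = 0) \<and>
     \<comment> \<open>direct sum of weight spaces (sums of simultaneous eigenspaces are automatically direct)\<close>
     UNIV \<subseteq> module.span sc (\<Union>lam. \<Union>mu. wspace n d sc E D lam mu) \<and>
     \<comment> \<open>finite-dimensional weight spaces\<close>
     (\<forall>lam mu. \<exists>B. finite B \<and> wspace n d sc E D lam mu \<subseteq> module.span sc B) \<and>
     \<comment> \<open>root vectors x_alpha \<otimes> t^m act locally nilpotently\<close>
     (\<forall>i<d. \<forall>j<d. i \<noteq> j \<longrightarrow> (\<forall>a\<in>Zn n. \<forall>v. \<exists>k. (E i j a ^^ k) v = 0)) \<and>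
     \<comment> \<open>irreducible\<close>
     (\<exists>v::'v. v \<noteq> 0) \<and>
     (\<forall>U. module.subspace sc U \<and>
          (\<forall>i<d. \<forall>j<d. \<forall>a\<in>Zn n. \<forall>v\<in>U. E i j a v \<in> U) \<and>
          (\<forall>k<n. \<forall>v\<in>U. D k v \<in> U)
        \<longrightarrow> U = {0} \<or> U = UNIV)"

definition Vplus :: "nat \<Rightarrow> nat \<Rightarrow> (nat \<Rightarrow> nat \<Rightarrow> (nat \<Rightarrow> int) \<Rightarrow> 'v::zero \<Rightarrow> 'v) \<Rightarrow> 'v set" where
  "Vplus n d E = {v. \<forall>i<d. \<forall>j<d. i < j \<longrightarrow> (\<forall>a\<in>Zn n. E i j a v = 0)}"

definition highest_central_op :: "nat \<Rightarrow> nat \<Rightarrow> (complex \<Rightarrow> 'v::ab_group_add \<Rightarrow> 'v)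
    \<Rightarrow> (nat \<Rightarrow> nat \<Rightarrow> (nat \<Rightarrow> int) \<Rightarrow> 'v \<Rightarrow> 'v) \<Rightarrow> (nat \<Rightarrow> 'v \<Rightarrow> 'v)
    \<Rightarrow> (nat \<Rightarrow> int) \<Rightarrow> ('v \<Rightarrow> 'v) \<Rightarrow> bool" where
  "highest_central_op n d sc E D m z \<longleftrightarrow>
     z ` Vplus n d E \<subseteq> Vplus n d E \<and>
     (\<forall>u\<in>Vplus n d E. \<forall>v\<in>Vplus n d E. z (u + v) = z u + z v) \<and>
     (\<forall>c. \<forall>v\<in>Vplus n d E. z (sc c v) = sc c (z v)) \<and>
     (\<forall>i<d. \<forall>a\<in>Zn n. \<forall>v\<in>Vplus n d E. z (E i i a v) = E i i a (z v)) \<and>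
     (\<forall>k<n. \<forall>v\<in>Vplus n d E. D k (z v) - z (D k v) = sc (of_int (m k)) (z v))"

end

theory Submission
  imports Defs
begin

theorem lemma5p14:
  fixes n d :: nat and q :: "nat \<Rightarrow> nat \<Rightarrow> complex"
    and sc :: "complex \<Rightarrow> 'v::ab_group_add \<Rightarrow> 'v"
    and E :: "nat \<Rightarrow> nat \<Rightarrow> (nat \<Rightarrow> int) \<Rightarrow> 'v \<Rightarrow> 'v" and D :: "nat \<Rightarrow> 'v \<Rightarrow> 'v"
    and M :: "nat \<Rightarrow> int" and z T :: "nat \<Rightarrow> 'v \<Rightarrow> 'v"
  assumes "n \<ge> 2" and "d \<ge> 2"
    and "qtorus_params n q"
    and "irr_int_module n d q sc E D"
    and "\<forall>i<n. highest_central_op n d sc E D (\<lambda>k. M i * unitvec i k) (z i)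
               \<and> bij_betw (z i) (Vplus n d E) (Vplus n d E)"
    and "\<forall>i<n. \<forall>v\<in>Vplus n d E. T i (z i v) = v"
  shows "\<forall>i<n.
     (\<forall>v\<in>Vplus n d E. T i (z i v) = v) \<and>
     (\<forall>j<d. \<forall>a\<in>Zn n. \<forall>v\<in>Vplus n d E. T i (E j j a v) = E j j a (T i v)) \<and>
     (\<forall>v\<in>Vplus n d E. T i v - v \<in> module.span sc {z l w - w | l w. l < n \<and> w \<in> Vplus n d E}) \<and>
     (\<forall>k\<ge>1. \<forall>v\<in>Vplus n d E. (T i ^^ k) v - v \<in> module.span sc {z l w - w | l w. l < n \<and> w \<in> Vplus n d E}) \<and>
     (\<forall>k\<ge>1. \<forall>v\<in>Vplus n d E. (z i ^^ k) v - v \<in> module.span sc {z l w - w | l w. l < n \<and> w \<in> Vplus n d E})"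
proof -
  have irr': "vector_space sc \<and>
     (\<forall>i<d. \<forall>j<d. \<forall>a\<in>Zn n. Vector_Spaces.linear sc sc (E i j a)) \<and>
     (\<forall>i<d. \<forall>j<d. \<forall>k<d. \<forall>l<d. \<forall>a\<in>Zn n. \<forall>b\<in>Zn n. \<forall>v.
        E i j a (E k l b v) - E k l b (E i j a v) =
          (if j = k then sc (qcoc n q a b) (E i l (\<lambda>x. a x + b x) v) else 0)
        - (if l = i then sc (qcoc n q b a) (E k j (\<lambda>x. a x + b x) v) else 0))"
    using assms(4) unfolding irr_int_module_def by (elim conjE) (intro conjI)
  have vs: "vector_space sc" using irr' by (rule conjunct1)
  interpret vs: vector_space sc by (rule vs)
  have lin: "\<And>i j a. i<d \<Longrightarrow> j<d \<Longrightarrow> a\<in>Zn n \<Longrightarrow> Vector_Spaces.linear sc sc (E i j a)"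
    using conjunct1[OF conjunct2[OF irr']] by simp
  have E0: "\<And>i j a. i<d \<Longrightarrow> j<d \<Longrightarrow> a\<in>Zn n \<Longrightarrow> E i j a 0 = 0"
    using lin module_hom.zero module_hom_iff_linear by metis
  have br: "\<And>i j k l a b v. i<d \<Longrightarrow> j<d \<Longrightarrow> k<d \<Longrightarrow> l<d \<Longrightarrow> a\<in>Zn n \<Longrightarrow> b\<in>Zn n \<Longrightarrow>
        E i j a (E k l b v) - E k l b (E i j a v) =
          (if j = k then sc (qcoc n q a b) (E i l (\<lambda>x. a x + b x) v) else 0)
        - (if l = i then sc (qcoc n q b a) (E k j (\<lambda>x. a x + b x) v) else 0)"
    using conjunct2[OF conjunct2[OF irr']] by simp
  have Zadd: "\<And>a b. a\<in>Zn n \<Longrightarrow> b\<in>Zn n \<Longrightarrow> (\<lambda>x. a x + b x) \<in> Zn n"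
    unfolding Zn_def by auto
  have EV: "E j j a v \<in> Vplus n d E" if "j<d" "a\<in>Zn n" "v \<in> Vplus n d E" for j a v
    unfolding Vplus_def
  proof (intro CollectI allI impI ballI)
    fix i k b assume ik: "i<d" "k<d" "i<k" "b\<in>Zn n"
    have vz: "E i k b v = 0" using that ik unfolding Vplus_def by blast
    have "E i k b (E j j a v) - E j j a (E i k b v) =
          (if k = j then sc (qcoc n q b a) (E i j (\<lambda>x. b x + a x) v) else 0)
        - (if j = i then sc (qcoc n q a b) (E j k (\<lambda>x. b x + a x) v) else 0)"
      using br[of i k j j b a v] ik that by simp
    moreover have "E i j (\<lambda>x. b x + a x) v = 0" if "k = j"
      using \<open>v \<in> Vplus n d E\<close> ik \<open>k=j\<close> Zadd[OF ik(4) \<open>a\<in>Zn n\<close>] unfolding Vplus_def by blast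
    moreover have "E j k (\<lambda>x. b x + a x) v = 0" if "j = i"
      using \<open>v \<in> Vplus n d E\<close> ik \<open>j=i\<close> Zadd[OF ik(4) \<open>a\<in>Zn n\<close>] unfolding Vplus_def by blast
    ultimately show "E i k b (E j j a v) = 0"
      using vz E0[of j j a] that ik by auto
  qed
  have eqd: "\<And>x y w :: 'v. x - y + (y - w) = x - w" by (simp add: algebra_simps)
  let ?W = "module.span sc {z l w - w | l w. l < n \<and> w \<in> Vplus n d E}"
  show ?thesis
  proof (rule allI, rule impI, intro conjI)
    fix i assume i: "i<n"
    have hc: "highest_central_op n d sc E D (\<lambda>k. M i * unitvec i k) (z i)"
      and bij: "bij_betw (z i) (Vplus n d E) (Vplus n d E)" using assms(5) i by auto
    have Tz: "\<And>v. v\<in>Vplus n d E \<Longrightarrow> T i (z i v) = v" using assms(6) i by blast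
    have zV: "\<And>v. v\<in>Vplus n d E \<Longrightarrow> z i v \<in> Vplus n d E" using bij bij_betwE by blast
    have surj: "\<And>v. v\<in>Vplus n d E \<Longrightarrow> \<exists>w\<in>Vplus n d E. v = z i w"
      using bij unfolding bij_betw_def by blast
    have TV: "\<And>v. v\<in>Vplus n d E \<Longrightarrow> T i v \<in> Vplus n d E" using surj Tz by metis
    have zT: "\<And>v. v\<in>Vplus n d E \<Longrightarrow> z i (T i v) = v" using surj Tz by metis
    have zE: "\<And>j a v. j<d \<Longrightarrow> a\<in>Zn n \<Longrightarrow> v\<in>Vplus n d E \<Longrightarrow> z i (E j j a v) = E j j a (z i v)"
      using hc unfolding highest_central_op_def by blast
    show "\<forall>v\<in>Vplus n d E. T i (z i v) = v" using Tz by blast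
    show "\<forall>j<d. \<forall>a\<in>Zn n. \<forall>v\<in>Vplus n d E. T i (E j j a v) = E j j a (T i v)"
    proof (intro allI impI ballI)
      fix j a v assume h: "j<d" "a\<in>Zn n" "v\<in>Vplus n d E"
      have "E j j a v = z i (E j j a (T i v))" using zE[OF h(1,2) TV[OF h(3)]] zT[OF h(3)] by simp
      then show "T i (E j j a v) = E j j a (T i v)" using Tz EV h TV by metis
    qed
    have gen: "\<And>w. w\<in>Vplus n d E \<Longrightarrow> z i w - w \<in> ?W"
      using i by (intro vs.span_base) blast
    have T1: "\<And>v. v\<in>Vplus n d E \<Longrightarrow> T i v - v \<in> ?W"
    proof -
      fix v assume v: "v\<in>Vplus n d E"
      have "- (z i (T i v) - T i v) \<in> ?W" using gen[OF TV[OF v]] vs.span_neg by blast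
      then show "T i v - v \<in> ?W" using zT[OF v] by simp
    qed
    then show "\<forall>v\<in>Vplus n d E. T i v - v \<in> ?W" by blast
    have TkV: "\<And>k v. v\<in>Vplus n d E \<Longrightarrow> (T i ^^ k) v \<in> Vplus n d E"
    proof -
      fix k v assume "v\<in>Vplus n d E" then show "(T i ^^ k) v \<in> Vplus n d E"
        by (induction k) (auto intro: TV)
    qed
    have zkV: "\<And>k v. v\<in>Vplus n d E \<Longrightarrow> (z i ^^ k) v \<in> Vplus n d E"
    proof -
      fix k v assume "v\<in>Vplus n d E" then show "(z i ^^ k) v \<in> Vplus n d E"
        by (induction k) (auto intro: zV)
    qed
    have Tk: "\<And>k v. v\<in>Vplus n d E \<Longrightarrow> (T i ^^ k) v - v \<in> ?W"
    proof -
      fix k v assume v: "v\<in>Vplus n d E"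
      show "(T i ^^ k) v - v \<in> ?W"
      proof (induction k)
        case 0 then show ?case using vs.span_zero by simp
      next
        case (Suc k)
        have "(T i ((T i ^^ k) v) - (T i ^^ k) v) + ((T i ^^ k) v - v) \<in> ?W"
          by (rule vs.span_add[OF T1[OF TkV[OF v]] Suc.IH])
        then show ?case by (simp add: eqd)
      qed
    qed
    have zk: "\<And>k v. v\<in>Vplus n d E \<Longrightarrow> (z i ^^ k) v - v \<in> ?W"
    proof -
      fix k v assume v: "v\<in>Vplus n d E"
      show "(z i ^^ k) v - v \<in> ?W"
      proof (induction k)
        case 0 then show ?case using vs.span_zero by simp
      next
        case (Suc k)
        have "(z i ((z i ^^ k) v) - (z i ^^ k) v) + ((z i ^^ k) v - v) \<in> ?W"
          by (rule vs.span_add[OF gen[OF zkV[OF v]] Suc.IH])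
        then show ?case by (simp add: eqd)
      qed
    qed
    show "\<forall>k\<ge>1. \<forall>v\<in>Vplus n d E. (T i ^^ k) v - v \<in> ?W" using Tk by blast
    show "\<forall>k\<ge>1. \<forall>v\<in>Vplus n d E. (z i ^^ k) v - v \<in> ?W" using zk by blast
  qed
qed

end
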